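(* Let $n\ge 1$ and let $V,H$ be real $2n\times 2n$ symmetric positive-definite matrices with respective symplectic eigenvalues $\lambda_1^V\ge \lambda_2^V\ge\cdots\ge\lambda_n^V>0$ and $\lambda_1^H\ge\lambda_2^H\ge\cdots\ge\lambda_n^H>0$. Then \[ \inf_{S\in Sp(2n)} \operatorname{tr}(S V S^{T} H) \;=\; 2\sum_{i=1}^{n} \lambda_i^{H}\,\lambda_{n+1-i}^{V}. \]
   Context: Let $J=\begin{bmatrix}0 & \mathbb{I}_n\\ -\mathbb{I}_n & 0\end{bmatrix}$ and $Sp(2n)=\{S\in\mathbb{R}^{2n\times 2n}: S^T J S = J\}$ be the real symplectic group. By Williamson's theorem, for every real symmetric positive-definite $2n\times 2n$ matrix $M$ there is $S_M\in Sp(2n)$ with $S_M^T M S_M=\begin{bmatrix}\mathcal{D}_M & 0\\ 0&\mathcal{D}_M\end{bmatrix}$, where $\mathcal{D}_M=\operatorname{diag}(\lambda_1^M,\dots,\lambda_n^M)$, $\lambda_1^M\ge\cdots\ge\lambda_n^M>0$; these numbers $\lambda_i^M$ are the symplectic eigenvalues of $M$ (equivalently, $\pm i\lambda_i^M$ are the eigenvalues of $JM$). *)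

theory Defs
  imports "Jordan_Normal_Form.Matrix"
begin

definition mat_trace :: "real mat \<Rightarrow> real" where
  "mat_trace A = (\<Sum>i<dim_row A. A $$ (i, i))"

definition sympJ :: "nat \<Rightarrow> real mat" where
  "sympJ n = four_block_mat (0\<^sub>m n n) (1\<^sub>m n) (- 1\<^sub>m n) (0\<^sub>m n n)"

definition Sp :: "nat \<Rightarrow> real mat set" where
  "Sp n = {S \<in> carrier_mat (2*n) (2*n). S\<^sup>T * sympJ n * S = sympJ n}"

definition sym_pos_def :: "nat \<Rightarrow> real mat \<Rightarrow> bool" where
  "sym_pos_def m M \<longleftrightarrow> M \<in> carrier_mat m m \<and> M\<^sup>T = M \<and>
     (\<forall>v \<in> carrier_vec m. v \<noteq> 0\<^sub>v m \<longrightarrow> v \<bullet> (M *\<^sub>v v) > 0)"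

text \<open>lam (indexed 1..n) lists the symplectic eigenvalues of M in nonincreasing order:
  lam 1 \<ge> ... \<ge> lam n > 0 and some S in Sp(2n) gives S^T M S = diag(D, D),
  D = diag(lam 1, ..., lam n) (Williamson normal form).\<close>
definition symplectic_eigenvalues :: "nat \<Rightarrow> real mat \<Rightarrow> (nat \<Rightarrow> real) \<Rightarrow> bool" where
  "symplectic_eigenvalues n M lam \<longleftrightarrow>
     (\<forall>i j. 1 \<le> i \<longrightarrow> i \<le> j \<longrightarrow> j \<le> n \<longrightarrow> lam j \<le> lam i) \<and>
     (\<forall>i. 1 \<le> i \<longrightarrow> i \<le> n \<longrightarrow> lam i > 0) \<and>
     (\<exists>S \<in> Sp n. S\<^sup>T * M * S =
        four_block_mat (mat_diag n (\<lambda>k. lam (k + 1))) (0\<^sub>m n n)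
                       (0\<^sub>m n n) (mat_diag n (\<lambda>k. lam (k + 1))))"

end

theory Submission
  imports Defs "Jordan_Normal_Form.Determinant" Complex_Main
begin


lemma cm: "(A::real mat) \<in> carrier_mat N N \<Longrightarrow> B \<in> carrier_mat N N \<Longrightarrow> A * B \<in> carrier_mat N N" by auto
lemma ct: "(A::real mat) \<in> carrier_mat N N \<Longrightarrow> transpose_mat A \<in> carrier_mat N N" by auto
lemma ca: "(A::real mat) \<in> carrier_mat N N \<Longrightarrow> B \<in> carrier_mat N N \<Longrightarrow> C \<in> carrier_mat N N \<Longrightarrow> A * B * C = A * (B * C)"
  by (rule assoc_mult_mat) auto
lemma ctm: "(A::real mat) \<in> carrier_mat N N \<Longrightarrow> B \<in> carrier_mat N N \<Longrightarrow> transpose_mat (A * B) = transpose_mat B * transpose_mat A"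
  by (rule transpose_mult) auto

lemma lm1: "(A::real mat) \<in> carrier_mat N N \<Longrightarrow> 1\<^sub>m N * A = A" by auto
lemma rm1: "(A::real mat) \<in> carrier_mat N N \<Longrightarrow> A * 1\<^sub>m N = A" by auto

lemma J_carrier[simp]: "sympJ n \<in> carrier_mat (2*n) (2*n)"
  unfolding sympJ_def mult_2 by auto

lemma J_dim[simp]: "dim_row (sympJ n) = 2*n" "dim_col (sympJ n) = 2*n"
  using J_carrier[of n] unfolding carrier_mat_def by auto

lemma J_T: "transpose_mat (sympJ n) = four_block_mat (0\<^sub>m n n) (- 1\<^sub>m n) (1\<^sub>m n) (0\<^sub>m n n)"
  unfolding sympJ_def by (subst transpose_four_block_mat[of _ n n _ n _ n], auto)

lemma JTJ: "transpose_mat (sympJ n) * sympJ n = 1\<^sub>m (2*n)"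
  unfolding J_T unfolding sympJ_def mult_2
  by (subst mult_four_block_mat[of _ n n _ n _ n], auto, (rule eq_matI; auto))

lemma JJT: "sympJ n * transpose_mat (sympJ n) = 1\<^sub>m (2*n)"
  unfolding J_T unfolding sympJ_def mult_2
  by (subst mult_four_block_mat[of _ n n _ n _ n], auto, (rule eq_matI; auto))

lemma JJ: "sympJ n * sympJ n = - 1\<^sub>m (2*n)" unfolding sympJ_def mult_2
    by (subst mult_four_block_mat[of _ n n _ n _ n], auto, (rule eq_matI; auto))

lemma JTm: "transpose_mat (sympJ n) = - sympJ n"
  unfolding J_T unfolding sympJ_def mult_2 by (rule eq_matI; auto)

lemma SpD: "S \<in> Sp n \<Longrightarrow> S \<in> carrier_mat (2*n) (2*n)" 
  "S \<in> Sp n \<Longrightarrow> transpose_mat S * sympJ n * S = sympJ n"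
  unfolding Sp_def by auto

lemma Sp_mult: assumes "A \<in> Sp n" "B \<in> Sp n" shows "A * B \<in> Sp n"
proof -
  have A: "A \<in> carrier_mat (2*n) (2*n)" and B: "B \<in> carrier_mat (2*n) (2*n)"
    using assms SpD by auto
  have "transpose_mat (A * B) * sympJ n * (A * B) = transpose_mat B * (transpose_mat A * sympJ n * A) * B"
    using A B by (simp add: cm ct lm1 rm1 ca[where N="2*n"] ctm[where N="2*n"])
  also have "\<dots> = sympJ n" unfolding SpD(2)[OF assms(1)] using SpD(2)[OF assms(2)] .
  finally show ?thesis using A B unfolding Sp_def by auto
qed

lemma J_Sp: "sympJ n \<in> Sp n"
proof -
  have "transpose_mat (sympJ n) * sympJ n * sympJ n = sympJ n"
    by (simp add: JTJ cm ct lm1 rm1)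
  thus ?thesis unfolding Sp_def by auto
qed

lemma Sp_left_inv: assumes "A \<in> Sp n"
  shows "(transpose_mat (sympJ n) * transpose_mat A * sympJ n) * A = 1\<^sub>m (2*n)"
proof -
  have A: "A \<in> carrier_mat (2*n) (2*n)" using assms SpD by auto
  have "(transpose_mat (sympJ n) * transpose_mat A * sympJ n) * A = transpose_mat (sympJ n) * (transpose_mat A * sympJ n * A)"
    using A by (simp add: cm ct lm1 rm1 ca[where N="2*n"] ctm[where N="2*n"])
  also have "\<dots> = 1\<^sub>m (2*n)" using assms SpD JTJ by simp
  finally show ?thesis .
qed

lemma Sp_right_inv: assumes "A \<in> Sp n"
  shows "A * (transpose_mat (sympJ n) * transpose_mat A * sympJ n) = 1\<^sub>m (2*n)"
  using mat_mult_left_right_inverse[OF _ SpD(1)[OF assms] Sp_left_inv[OF assms]] SpD(1)[OF assms]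
  by (simp add: cm ct lm1 rm1 ca[where N="2*n"] ctm[where N="2*n"])

lemma Sp_transpose: assumes "A \<in> Sp n" shows "transpose_mat A \<in> Sp n"
proof -
  have A: "A \<in> carrier_mat (2*n) (2*n)" using assms SpD by auto
  let ?J = "sympJ n"
  have "A * (transpose_mat ?J * transpose_mat A * ?J) = 1\<^sub>m (2*n)"
    using Sp_right_inv[OF assms] .
  hence "A * (transpose_mat ?J * transpose_mat A * ?J) * transpose_mat ?J = transpose_mat ?J" 
    using A by (simp add: cm ct lm1 rm1 ca[where N="2*n"] ctm[where N="2*n"])
  hence e1: "A * (transpose_mat ?J * transpose_mat A) = transpose_mat ?J"
    using A by (simp add: JJT cm ct lm1 rm1 ca[where N="2*n"])
  have "A * (- ?J * transpose_mat A) = - (A * (?J * transpose_mat A))" using A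
    by (subst uminus_mult_left_mat, simp, subst uminus_mult_right_mat, auto)
  hence "A * ?J * transpose_mat A = ?J" using A e1 unfolding JTm by (simp add: ca[where N="2*n"])
  thus ?thesis using A unfolding Sp_def by (auto simp: cm ct)
qed



lemma sum_2n: "(\<Sum>a<2*n. (F::nat\<Rightarrow>real) a) = (\<Sum>i<n. F i + F (i+n))"
proof -
  have "(\<Sum>a<2*n. F a) = (\<Sum>a\<in>{0..<n}. F a) + (\<Sum>a\<in>{n..<2*n}. F a)"
    by (subst sum.atLeastLessThan_concat) (auto simp: lessThan_atLeast0)
  also have "(\<Sum>a\<in>{n..<2*n}. F a) = (\<Sum>i\<in>{0..<n}. F (i+n))"
    using sum.shift_bounds_nat_ivl[of F 0 n n] by (simp add: mult_2)
  finally show ?thesis by (simp add: sum.distrib lessThan_atLeast0)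
qed

definition pr :: "nat \<Rightarrow> nat \<Rightarrow> nat" where "pr n a = (if a < n then a else a - n)"

definition DD :: "nat \<Rightarrow> (nat \<Rightarrow> real) \<Rightarrow> real mat" where
  "DD n f = four_block_mat (mat_diag n f) (0\<^sub>m n n) (0\<^sub>m n n) (mat_diag n f)"

lemma DD_diag: "DD n f = mat_diag (2*n) (\<lambda>a. f (pr n a))"
  unfolding DD_def by (rule eq_matI) (auto simp: mat_diag_def pr_def)

lemma DD_carrier[simp]: "DD n f \<in> carrier_mat (2*n) (2*n)"
  unfolding DD_diag by simp

definition qq :: "real mat \<Rightarrow> nat \<Rightarrow> nat \<Rightarrow> nat \<Rightarrow> real" where
  "qq T n i j = (T$$(i,j))^2 + (T$$(i,j+n))^2 + (T$$(i+n,j))^2 + (T$$(i+n,j+n))^2"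

lemma trace_formula: assumes T: "T \<in> carrier_mat (2*n) (2*n)"
  shows "mat_trace (T * DD n f * transpose_mat T * DD n g) = (\<Sum>i<n. \<Sum>j<n. g i * f j * qq T n i j)"
proof -
  let ?f = "\<lambda>a. f (pr n a)" and ?g = "\<lambda>a. g (pr n a)"
  have TD: "T * DD n f = mat (2*n) (2*n) (\<lambda>(i,j). T $$ (i,j) * ?f j)"
    unfolding DD_diag using mat_diag_mult_right[OF T] by simp
  have C: "T * DD n f * transpose_mat T \<in> carrier_mat (2*n) (2*n)" using T by (simp add: cm ct)
  have "mat_trace (T * DD n f * transpose_mat T * DD n g) = (\<Sum>a<2*n. (T * DD n f * transpose_mat T) $$ (a,a) * ?g a)"
    unfolding mat_trace_def DD_diag[of n g] mat_diag_mult_right[OF C] by simp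
  also have "\<dots> = (\<Sum>a<2*n. (\<Sum>b<2*n. ?g a * ?f b * (T$$(a,b))^2))"
  proof (rule sum.cong[OF refl])
    fix a assume a: "a \<in> {..<2*n}"
    have "(T * DD n f * transpose_mat T) $$ (a,a) = (\<Sum>b<2*n. T $$ (a,b) * ?f b * T $$ (a,b))"
      using a T unfolding TD by (simp add: scalar_prod_def lessThan_atLeast0)
    thus "(T * DD n f * transpose_mat T) $$ (a,a) * ?g a = (\<Sum>b<2*n. ?g a * ?f b * (T$$(a,b))^2)"
      by (simp add: sum_distrib_left power2_eq_square mult_ac)
  qed
  also have "\<dots> = (\<Sum>i<n. \<Sum>j<n. g i * f j * qq T n i j)"
    unfolding sum_2n by (rule sum.cong[OF refl], unfold sum.distrib[symmetric], rule sum.cong[OF refl])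
      (auto simp: pr_def qq_def algebra_simps)
  finally show ?thesis .
qed



definition ip :: "nat set \<Rightarrow> (nat \<Rightarrow> real) \<Rightarrow> (nat \<Rightarrow> real) \<Rightarrow> real" where
  "ip X x y = (\<Sum>a\<in>X. x a * y a)"

definition ON :: "nat set \<Rightarrow> (nat \<Rightarrow> nat \<Rightarrow> real) \<Rightarrow> nat \<Rightarrow> bool" where
  "ON X zs r \<longleftrightarrow> (\<forall>i<r. \<forall>j<r. ip X (zs i) (zs j) = (if i = j then 1 else 0))"

lemma ip_comm: "ip X x y = ip X y x" unfolding ip_def by (simp add: mult.commute)

lemma ip_lin: "ip X (\<lambda>a. x a + k * y a) w = ip X x w + k * ip X y w"
  unfolding ip_def by (simp add: algebra_simps sum.distrib sum_distrib_left)

lemma ip_lin2: "ip X w (\<lambda>a. x a + k * y a) = ip X w x + k * ip X w y"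
  using ip_lin[of X x k y w] by (simp add: ip_comm)

lemma ip_comb: "ip X (\<lambda>a. \<Sum>j<r. b j * zs j a) w = (\<Sum>j<r. b j * ip X (zs j) w)"
  unfolding ip_def by (simp add: sum_distrib_left sum_distrib_right mult_ac sum.swap[of _ X])

lemma ON_comb: assumes "ON X zs r" "i < r"
  shows "ip X (\<lambda>a. \<Sum>j<r. b j * zs j a) (zs i) = b i"
proof -
  have "ip X (\<lambda>a. \<Sum>j<r. b j * zs j a) (zs i) = (\<Sum>j<r. b j * (if j = i then 1 else 0))"
    unfolding ip_comb using assms unfolding ON_def by (intro sum.cong) auto
  also have "\<dots> = b i" using assms(2) by (simp add: if_distrib cong: if_cong)
  finally show ?thesis .
qed

lemma ip_self_nonneg: "0 \<le> ip X x x"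
  unfolding ip_def by (intro sum_nonneg) auto

lemma bessel: assumes "ON X zs r"
  shows "(\<Sum>i<r. (ip X (zs i) w)^2) \<le> ip X w w"
proof -
  define al where "al i = ip X (zs i) w" for i
  define y where "y a = (\<Sum>j<r. al j * zs j a)" for a
  have yw: "ip X y w = (\<Sum>i<r. (al i)^2)"
    unfolding y_def ip_comb al_def by (simp add: power2_eq_square)
  have yy: "ip X y y = (\<Sum>i<r. (al i)^2)"
  proof -
    have "ip X y y = (\<Sum>j<r. al j * ip X (zs j) y)" unfolding y_def[abs_def] ip_comb ..
    also have "\<dots> = (\<Sum>j<r. al j * al j)"
      by (rule sum.cong[OF refl]) (simp add: ip_comm[of X "zs _"] y_def[abs_def] ON_comb[OF assms])
    finally show ?thesis by (simp add: power2_eq_square)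
  qed
  have "0 \<le> ip X (\<lambda>a. w a + (-1) * y a) (\<lambda>a. w a + (-1) * y a)" by (rule ip_self_nonneg)
  also have "\<dots> = ip X w w - 2 * ip X y w + ip X y y"
    unfolding ip_lin ip_lin2 by (simp add: ip_comm[of X w y])
  finally show ?thesis using yw yy unfolding al_def by simp
qed



lemma ON_base: assumes "finite X"
  shows "\<exists>zs. ON X zs (card X)"
proof -
  obtain f where f: "bij_betw f {0..<card X} X" using ex_bij_betw_nat_finite[OF assms] by blast
  define zs where "zs i = (\<lambda>a. if a = f i then 1 else 0::real)" for i
  have "ON X zs (card X)" unfolding ON_def
  proof (intro allI impI)
    fix i j assume i: "i < card X" and j: "j < card X"
    have fi: "f i \<in> X" using f i by (auto simp: bij_betw_def)
    have "ip X (zs i) (zs j) = (\<Sum>a\<in>X. if a = f i then (if f i = f j then 1 else 0) else 0)"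
      unfolding ip_def zs_def by (intro sum.cong) auto
    also have "\<dots> = (if f i = f j then 1 else 0)" using fi assms by simp
    also have "\<dots> = (if i = j then 1 else 0)" using f i j unfolding bij_betw_def inj_on_def by auto
    finally show "ip X (zs i) (zs j) = (if i = j then 1 else 0)" .
  qed
  thus ?thesis by blast
qed

lemma ON_mono: "ON X zs r \<Longrightarrow> r' \<le> r \<Longrightarrow> ON X zs r'"
  unfolding ON_def by auto

lemma householder_step:
  assumes ON: "ON X zs r" and r: "0 < r"
    and perp: "\<forall>i<r. \<forall>t<q. ip X (zs i) (cs t) = 0"
  shows "\<exists>zs'. ON X zs' (r - 1) \<and> (\<forall>i<r-1. \<forall>t<Suc q. ip X (zs' i) (cs t) = 0)"
proof -
  define c where "c = cs q"
  define al where "al i = ip X (zs i) c" for i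
  define S where "S = (\<Sum>i<r. (al i)^2)"
  define l where "l = r - 1"
  have rl: "r = Suc l" using r l_def by simp
  have S0: "0 \<le> S" unfolding S_def by (intro sum_nonneg) auto
  show ?thesis
  proof (cases "S = 0")
    case True
    hence "\<forall>i<r. al i = 0" unfolding S_def using sum_nonneg_eq_0_iff[of "{..<r}" "\<lambda>i. (al i)^2"] by auto
    hence "\<forall>i<r-1. \<forall>t<Suc q. ip X (zs i) (cs t) = 0" using perp unfolding al_def c_def
      by (metis diff_le_self less_Suc_eq order_less_le_trans)
    thus ?thesis using ON_mono[OF ON, of "r-1"] by auto
  next
    case False
    hence Sp: "0 < S" using S0 by simp
    define ny where "ny = sqrt S"
    have ny: "0 < ny" "ny * ny = S" using Sp unfolding ny_def by (auto simp: real_sqrt_mult_self)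
    have Ssplit: "S = (\<Sum>i<l. (al i)^2) + (al l)^2" unfolding S_def rl by simp
    show ?thesis
    proof (cases "al l = ny")
      case True
      hence "(\<Sum>i<l. (al i)^2) = 0" using Ssplit ny by (simp add: power2_eq_square)
      hence "\<forall>i<l. al i = 0" using sum_nonneg_eq_0_iff[of "{..<l}" "\<lambda>i. (al i)^2"] by auto
      hence "\<forall>i<r-1. \<forall>t<Suc q. ip X (zs i) (cs t) = 0" using perp unfolding al_def c_def l_def
        by (metis diff_le_self less_Suc_eq order_less_le_trans)
      thus ?thesis using ON_mono[OF ON, of "r-1"] by auto
    next
      case False
      hence alne: "al l \<noteq> ny" .
      define ga where "ga j = al j / ny - (if j = l then 1 else 0)" for j
      define v where "v a = (\<Sum>j<r. ga j * zs j a)" for a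
      have vz: "ip X v (zs i) = ga i" if "i < r" for i
        unfolding v_def[abs_def] using ON_comb[OF ON that] .
      have vv: "ip X v v = 2 - 2 * al l / ny"
      proof -
        have "ip X v v = (\<Sum>j<r. ga j * ip X (zs j) v)" unfolding v_def[abs_def] ip_comb ..
        also have "\<dots> = (\<Sum>j<r. ga j * ga j)"
          by (rule sum.cong[OF refl]) (simp add: ip_comm[of X "zs _"] vz)
        also have "\<dots> = (\<Sum>j<r. (al j)^2 / (ny*ny) - 2 * (if j = l then al j / ny else 0) + (if j = l then 1 else 0))"
          unfolding ga_def using ny(1) by (intro sum.cong[OF refl]) (auto simp: power2_eq_square field_simps)
        also have "\<dots> = S / (ny*ny) - 2 * (al l / ny) + 1"
          unfolding sum.distrib sum_subtractf using rl Ssplit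
          by (simp add: sum_divide_distrib[symmetric] sum_distrib_left[symmetric])
        also have "\<dots> = 2 - 2 * al l / ny" using ny Sp by simp
        finally show ?thesis .
      qed
      have vv0: "ip X v v \<noteq> 0" unfolding vv using False ny by (auto simp: field_simps)
      have vc: "ip X v c = ny - al l"
      proof -
        have "ip X v c = (\<Sum>j<r. ga j * al j)" unfolding v_def[abs_def] ip_comb al_def ..
        also have "\<dots> = (\<Sum>j<r. (al j)^2 / ny - (if j = l then al j else 0))"
          unfolding ga_def by (rule sum.cong[OF refl]) (auto simp: power2_eq_square field_simps)
        also have "\<dots> = S / ny - al l"
          unfolding sum_subtractf using rl Ssplit by (simp add: sum_divide_distrib[symmetric])
        also have "\<dots> = ny - al l" using ny by (metis nonzero_mult_div_cancel_right less_irrefl)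
        finally show ?thesis .
      qed
      have vct: "ip X v (cs t) = 0" if "t < q" for t
        unfolding v_def[abs_def] ip_comb using perp that by simp
      define zs' where "zs' i = (\<lambda>a. zs i a + (-2 * ga i / ip X v v) * v a)" for i
      have "ON X zs' l" unfolding ON_def
      proof (intro allI impI)
        fix i j assume i: "i < l" and j: "j < l"
        have "ip X (zs' i) (zs' j) = ip X (zs i) (zs j) + (-2 * ga j / ip X v v) * ip X (zs i) v
           + (-2 * ga i / ip X v v) * (ip X v (zs j) + (-2 * ga j / ip X v v) * ip X v v)"
          unfolding zs'_def ip_lin ip_lin2 by (simp add: algebra_simps)
        also have "\<dots> = ip X (zs i) (zs j)"
          using i j rl vz[of i] vz[of j] vv0 by (simp add: ip_comm[of X "zs i" v] field_simps)
        finally show "ip X (zs' i) (zs' j) = (if i = j then 1 else 0)"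
          using ON i j rl unfolding ON_def by auto
      qed
      moreover have "\<forall>i<l. \<forall>t<Suc q. ip X (zs' i) (cs t) = 0"
      proof (intro allI impI)
        fix i t assume i: "i < l" and t: "t < Suc q"
        have e: "ip X (zs' i) (cs t) = ip X (zs i) (cs t) + (-2 * ga i / ip X v v) * ip X v (cs t)"
          unfolding zs'_def ip_lin ..
        show "ip X (zs' i) (cs t) = 0"
        proof (cases "t < q")
          case True thus ?thesis using e vct perp i rl by simp
        next
          case False
          hence tq: "t = q" using t by simp
          have gi: "ga i = al i / ny" unfolding ga_def using i by simp
          have "ip X (zs' i) (cs t) = al i + (-2 * (al i / ny) / (2 - 2 * al l / ny)) * (ny - al l)"
            using e unfolding tq c_def[symmetric] vc vv gi al_def by simp
          also have "\<dots> = 0" using ny alne by (simp add: field_simps)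
          finally show ?thesis .
        qed
      qed
      ultimately show ?thesis unfolding l_def by blast
    qed
  qed
qed

lemma exists_ON: assumes "finite X"
  shows "\<exists>zs r. ON X zs r \<and> card X \<le> r + q \<and> (\<forall>i<r. \<forall>t<q. ip X (zs i) (cs t) = 0)"
proof (induction q)
  case 0
  then show ?case using ON_base[OF assms] by auto
next
  case (Suc q)
  then obtain zs r where zs: "ON X zs r" "card X \<le> r + q" "\<forall>i<r. \<forall>t<q. ip X (zs i) (cs t) = 0"
    by blast
  show ?case
  proof (cases "r = 0")
    case True
    thus ?thesis using zs by (intro exI[of _ zs] exI[of _ 0]) (auto simp: ON_def)
  next
    case False
    then obtain zs' where "ON X zs' (r - 1)" "\<forall>i<r-1. \<forall>t<Suc q. ip X (zs' i) (cs t) = 0"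
      using householder_step[OF zs(1) _ zs(3)] by auto
    thus ?thesis using zs(2) False by (intro exI[of _ zs'] exI[of _ "r-1"]) auto
  qed
qed



definition Xs :: "nat \<Rightarrow> nat \<Rightarrow> nat set" where "Xs n K = {..<K} \<union> {n..<n+K}"
definition Jv :: "nat \<Rightarrow> (nat \<Rightarrow> real) \<Rightarrow> nat \<Rightarrow> real" where
  "Jv n x b = (if b < n then x (b+n) else - x (b-n))"
definition Jm :: "nat \<Rightarrow> nat \<Rightarrow> nat \<Rightarrow> real" where
  "Jm n a a' = (if a < n then (if a' = a+n then 1 else 0) else (if a' + n = a then -1 else 0))"
definition Jw :: "nat \<Rightarrow> (nat \<Rightarrow> real) \<Rightarrow> nat \<Rightarrow> real" where
  "Jw n z a' = (if a' < n then - z (a'+n) else z (a'-n))"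

lemma Xs_finite[simp]: "finite (Xs n K)" unfolding Xs_def by auto

lemma psum: assumes "K \<le> n" shows "sum f (Xs n K) = (\<Sum>i<K. f i + f (i+n))"
proof -
  have "sum f (Xs n K) = sum f {..<K} + sum f {n..<n+K}"
    unfolding Xs_def using assms by (intro sum.union_disjoint) auto
  also have "sum f {n..<n+K} = (\<Sum>i = 0..<K. f (i + n))"
    using sum.shift_bounds_nat_ivl[of f 0 n K] by (simp add: add.commute)
  finally show ?thesis by (simp add: sum.distrib lessThan_atLeast0)
qed

lemma Xs_card: assumes "K \<le> n" shows "card (Xs n K) = 2*K"
  unfolding Xs_def using assms by (subst card_Un_disjoint) auto

lemma Xs_sub: "K \<le> n \<Longrightarrow> Xs n K \<subseteq> {..<2*n}" unfolding Xs_def by auto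

lemma Jw_ip: assumes "K \<le> n" shows "ip (Xs n K) (Jw n x) (Jw n y) = ip (Xs n K) x y"
  unfolding ip_def psum[OF assms] Jw_def using assms by (intro sum.cong) auto

lemma Jw_Jm: assumes K: "K \<le> n" and a: "a \<in> Xs n K"
  shows "(\<Sum>a'\<in>Xs n K. Jw n z a' * Jm n a a') = z a"
proof (cases "a < n")
  case True
  have "(\<Sum>a'\<in>Xs n K. Jw n z a' * Jm n a a') = (\<Sum>a'\<in>Xs n K. if a' = a + n then Jw n z a' else 0)"
    unfolding Jm_def using True by (intro sum.cong) auto
  also have "\<dots> = z a" using True a K unfolding Xs_def Jw_def by auto
  finally show ?thesis .
next
  case False
  have "(\<Sum>a'\<in>Xs n K. Jw n z a' * Jm n a a') = (\<Sum>a'\<in>Xs n K. if a' = a - n then - Jw n z a' else 0)"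
    unfolding Jm_def using False by (intro sum.cong) auto
  also have "\<dots> = z a" using False a K unfolding Xs_def Jw_def by auto
  finally show ?thesis .
qed

lemma Jv_lin: "Jv n (\<lambda>b'. \<Sum>a'\<in>A. w a' * m a' b') b = (\<Sum>a'\<in>A. w a' * Jv n (m a') b)"
  unfolding Jv_def by (auto simp: sum_negf)

lemma Jv_sq: assumes "L \<le> n" shows "(\<Sum>b\<in>Xs n L. (Jv n v b)^2) = (\<Sum>b\<in>Xs n L. (v b)^2)"
  unfolding psum[OF assms] Jv_def using assms by (intro sum.cong) auto

lemma single_z:
  assumes K: "K \<le> n" and L: "L \<le> n"
  and hyp: "\<And>a a'. a < 2*n \<Longrightarrow> a' < 2*n \<Longrightarrow> (\<Sum>b<2*n. m a b * Jv n (m a') b) = Jm n a a'"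
  and zz: "ip (Xs n K) z z = 1"
  and perp: "\<And>b. b < 2*n \<Longrightarrow> b \<notin> Xs n L \<Longrightarrow> ip (Xs n K) z (\<lambda>a. m a b) = 0"
  shows "2 \<le> (\<Sum>b\<in>Xs n L. (ip (Xs n K) z (\<lambda>a. m a b))^2 + (ip (Xs n K) (Jw n z) (\<lambda>a. m a b))^2)"
proof -
  let ?X = "Xs n K"
  define w where "w = Jw n z"
  define u where "u b = ip ?X z (\<lambda>a. m a b)" for b
  define v where "v b = ip ?X w (\<lambda>a. m a b)" for b
  have Xn: "\<And>a. a \<in> ?X \<Longrightarrow> a < 2*n" using Xs_sub[OF K] by auto
  have "1 = (\<Sum>a\<in>?X. z a * z a)" using zz unfolding ip_def by simp
  also have "\<dots> = (\<Sum>a\<in>?X. z a * (\<Sum>a'\<in>?X. w a' * Jm n a a'))"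
    unfolding w_def using Jw_Jm[OF K] by (intro sum.cong) auto
  also have "\<dots> = (\<Sum>a\<in>?X. \<Sum>a'\<in>?X. z a * w a' * (\<Sum>b<2*n. m a b * Jv n (m a') b))"
    using hyp Xn by (auto simp: sum_distrib_left mult_ac intro!: sum.cong)
  also have "\<dots> = (\<Sum>a\<in>?X. \<Sum>b<2*n. \<Sum>a'\<in>?X. (z a * m a b) * (w a' * Jv n (m a') b))"
    by (rule sum.cong[OF refl], subst sum.swap) (simp add: sum_distrib_left mult_ac)
  also have "\<dots> = (\<Sum>b<2*n. \<Sum>a\<in>?X. \<Sum>a'\<in>?X. (z a * m a b) * (w a' * Jv n (m a') b))"
    by (rule sum.swap)
  also have "\<dots> = (\<Sum>b<2*n. u b * Jv n v b)"
    unfolding u_def v_def ip_def Jv_lin sum_product by simp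
  also have "\<dots> = (\<Sum>b\<in>Xs n L. u b * Jv n v b)"
    using perp Xs_sub[OF L] unfolding u_def by (intro sum.mono_neutral_right) auto
  finally have one: "1 = (\<Sum>b\<in>Xs n L. u b * Jv n v b)" .
  have "2 * (\<Sum>b\<in>Xs n L. u b * Jv n v b) \<le> (\<Sum>b\<in>Xs n L. (u b)^2 + (Jv n v b)^2)"
    unfolding sum_distrib_left
  proof (rule sum_mono)
    fix b show "2 * (u b * Jv n v b) \<le> (u b)^2 + (Jv n v b)^2"
      using zero_le_power2[of "u b - Jv n v b"] unfolding power2_diff by linarith
  qed
  also have "\<dots> = (\<Sum>b\<in>Xs n L. (u b)^2 + (v b)^2)"
    unfolding sum.distrib Jv_sq[OF L] ..
  finally show ?thesis using one unfolding u_def v_def w_def by simp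
qed



lemma core:
  assumes K: "K \<le> n" and L: "L \<le> n"
  and hyp: "\<And>a a'. a < 2*n \<Longrightarrow> a' < 2*n \<Longrightarrow> (\<Sum>b<2*n. m a b * Jv n (m a') b) = Jm n a a'"
  shows "2*real K + 2*real L - 2*real n \<le> (\<Sum>b\<in>Xs n L. \<Sum>a\<in>Xs n K. (m a b)^2)"
proof -
  let ?X = "Xs n K"
  define C where "C = {..<2*n} - Xs n L"
  have Cfin: "finite C" unfolding C_def by auto
  have cardC: "card C = 2*n - 2*L"
    unfolding C_def using Xs_sub[OF L] Xs_card[OF L] by (simp add: card_Diff_subset)
  obtain g where g: "bij_betw g {0..<card C} C" using ex_bij_betw_nat_finite[OF Cfin] by blast
  define cs where "cs t = (\<lambda>a. m a (g t))" for t
  obtain zs r where zs: "ON ?X zs r" "card ?X \<le> r + card C"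
    and perp: "\<forall>i<r. \<forall>t<card C. ip ?X (zs i) (cs t) = 0"
    using exists_ON[of ?X "card C" cs] by auto
  have r: "2*real K + 2*real L - 2*real n \<le> real r"
    using zs(2) unfolding Xs_card[OF K] cardC using L by linarith
  have perp': "ip ?X (zs i) (\<lambda>a. m a b) = 0" if "i < r" "b < 2*n" "b \<notin> Xs n L" for i b
  proof -
    have "b \<in> C" using that unfolding C_def by auto
    then obtain t where "t < card C" "g t = b" using g unfolding bij_betw_def by (metis atLeastLessThan_iff imageE)
    thus ?thesis using perp that unfolding cs_def by auto
  qed
  have ONw: "ON ?X (\<lambda>i. Jw n (zs i)) r" using zs(1) unfolding ON_def Jw_ip[OF K] .
  have "2 * real r = (\<Sum>i<r. 2)" by simp
  also have "\<dots> \<le> (\<Sum>i<r. \<Sum>b\<in>Xs n L. (ip ?X (zs i) (\<lambda>a. m a b))^2 + (ip ?X (Jw n (zs i)) (\<lambda>a. m a b))^2)"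
  proof (rule sum_mono)
    fix i assume i: "i \<in> {..<r}"
    have "ip ?X (zs i) (zs i) = 1" using zs(1) i unfolding ON_def by auto
    thus "2 \<le> (\<Sum>b\<in>Xs n L. (ip ?X (zs i) (\<lambda>a. m a b))^2 + (ip ?X (Jw n (zs i)) (\<lambda>a. m a b))^2)"
      using single_z[OF K L hyp] perp' i by auto
  qed
  also have "\<dots> = (\<Sum>b\<in>Xs n L. (\<Sum>i<r. (ip ?X (zs i) (\<lambda>a. m a b))^2) + (\<Sum>i<r. (ip ?X (Jw n (zs i)) (\<lambda>a. m a b))^2))"
    by (subst sum.swap) (simp add: sum.distrib)
  also have "\<dots> \<le> (\<Sum>b\<in>Xs n L. 2 * ip ?X (\<lambda>a. m a b) (\<lambda>a. m a b))"
  proof (rule sum_mono)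
    fix b
    have "(\<Sum>i<r. (ip ?X (zs i) (\<lambda>a. m a b))^2) \<le> ip ?X (\<lambda>a. m a b) (\<lambda>a. m a b)"
      by (rule bessel[OF zs(1)])
    moreover have "(\<Sum>i<r. (ip ?X (Jw n (zs i)) (\<lambda>a. m a b))^2) \<le> ip ?X (\<lambda>a. m a b) (\<lambda>a. m a b)"
      using bessel[OF ONw] by simp
    ultimately show "(\<Sum>i<r. (ip ?X (zs i) (\<lambda>a. m a b))^2) + (\<Sum>i<r. (ip ?X (Jw n (zs i)) (\<lambda>a. m a b))^2)
      \<le> 2 * ip ?X (\<lambda>a. m a b) (\<lambda>a. m a b)" by linarith
  qed
  also have "\<dots> = 2 * (\<Sum>b\<in>Xs n L. \<Sum>a\<in>?X. (m a b)^2)"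
    by (simp add: ip_def sum_distrib_left power2_eq_square)
  finally show ?thesis using r by linarith
qed



lemma abel1:
  fixes e x :: "nat \<Rightarrow> real" and n :: nat
  defines "E \<equiv> (\<lambda>k. if k < n then e k else 0)"
  shows "(\<Sum>i<n. e i * x i) = (\<Sum>k<n. (E k - E (Suc k)) * (\<Sum>i<Suc k. x i))"
proof -
  have tel: "e i = (\<Sum>k<n. if i \<le> k then E k - E (Suc k) else 0)" if i: "i < n" for i
  proof -
    have "(\<Sum>k<n. if i \<le> k then E k - E (Suc k) else 0) = (\<Sum>k\<in>{i..<n}. E k - E (Suc k))"
      by (rule sum.mono_neutral_cong_right) auto
    also have "\<dots> = - (\<Sum>k\<in>{i..<n}. E (Suc k) - E k)" by (simp add: sum_negf[symmetric])
    also have "\<dots> = E i - E n" using i by (subst sum_Suc_diff') auto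
    also have "\<dots> = e i" using i unfolding E_def by simp
    finally show ?thesis by simp
  qed
  have "(\<Sum>i<n. e i * x i) = (\<Sum>i<n. \<Sum>k<n. (if i \<le> k then E k - E (Suc k) else 0) * x i)"
    by (rule sum.cong[OF refl]) (simp add: tel sum_distrib_right)
  also have "\<dots> = (\<Sum>k<n. \<Sum>i<n. (if i \<le> k then E k - E (Suc k) else 0) * x i)"
    by (rule sum.swap)
  also have "\<dots> = (\<Sum>k<n. (E k - E (Suc k)) * (\<Sum>i<Suc k. x i))"
  proof (rule sum.cong[OF refl])
    fix k assume k: "k \<in> {..<n}"
    have "(\<Sum>i<n. (if i \<le> k then E k - E (Suc k) else 0) * x i) = (\<Sum>i<Suc k. (E k - E (Suc k)) * x i)"
      using k by (intro sum.mono_neutral_cong_right) auto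
    thus "(\<Sum>i<n. (if i \<le> k then E k - E (Suc k) else 0) * x i) = (E k - E (Suc k)) * (\<Sum>i<Suc k. x i)"
      by (simp only: sum_distrib_left)
  qed
  finally show ?thesis .
qed

lemma abel2:
  fixes e d :: "nat \<Rightarrow> real" and m :: "nat \<Rightarrow> nat \<Rightarrow> real" and n :: nat
  defines "E \<equiv> (\<lambda>k. if k < n then e k else 0)" and "D \<equiv> (\<lambda>k. if k < n then d k else 0)"
  shows "(\<Sum>i<n. \<Sum>j<n. e i * d j * m i j) =
    (\<Sum>k<n. (E k - E (Suc k)) * (\<Sum>l<n. (D l - D (Suc l)) * (\<Sum>j<Suc l. \<Sum>i<Suc k. m i j)))"
proof -
  have "(\<Sum>i<n. \<Sum>j<n. e i * d j * m i j) = (\<Sum>i<n. e i * (\<Sum>j<n. d j * m i j))"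
    by (simp add: sum_distrib_left mult_ac)
  also have "\<dots> = (\<Sum>k<n. (E k - E (Suc k)) * (\<Sum>i<Suc k. \<Sum>j<n. d j * m i j))"
    unfolding E_def by (rule abel1)
  also have "\<dots> = (\<Sum>k<n. (E k - E (Suc k)) * (\<Sum>j<n. d j * (\<Sum>i<Suc k. m i j)))"
  proof -
    have "(\<Sum>i<Suc k. \<Sum>j<n. d j * m i j) = (\<Sum>j<n. d j * (\<Sum>i<Suc k. m i j))" for k
      by (simp only: sum_distrib_left, rule sum.swap)
    thus ?thesis by simp
  qed
  also have "\<dots> = (\<Sum>k<n. (E k - E (Suc k)) * (\<Sum>l<n. (D l - D (Suc l)) * (\<Sum>j<Suc l. \<Sum>i<Suc k. m i j)))"
    unfolding D_def by (subst abel1) (rule refl)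
  finally show ?thesis .
qed

lemma abel_ineq:
  fixes e d :: "nat \<Rightarrow> real" and q :: "nat \<Rightarrow> nat \<Rightarrow> real"
  assumes e_mono: "\<And>i j. i \<le> j \<Longrightarrow> j < n \<Longrightarrow> e j \<le> e i" and e_pos: "\<And>i. i < n \<Longrightarrow> 0 \<le> e i"
    and d_mono: "\<And>i j. i \<le> j \<Longrightarrow> j < n \<Longrightarrow> d j \<le> d i" and d_pos: "\<And>i. i < n \<Longrightarrow> 0 \<le> d i"
    and q_nn: "\<And>i j. 0 \<le> q i j"
    and pref: "\<And>K L. K \<le> n \<Longrightarrow> L \<le> n \<Longrightarrow> 2*real K + 2*real L - 2*real n \<le> (\<Sum>j<L. \<Sum>i<K. q i j)"
  shows "2 * (\<Sum>i<n. e i * d (n-1-i)) \<le> (\<Sum>i<n. \<Sum>j<n. e i * d j * q i j)"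
proof -
  define E where "E = (\<lambda>k. if k < n then e k else 0)"
  define D where "D = (\<lambda>k. if k < n then d k else 0)"
  define p where "p i j = (if i + j = n - 1 then 2 else (0::real))" for i j
  have dE: "0 \<le> E k - E (Suc k)" if "k < n" for k
    using that e_mono[of k "Suc k"] e_pos[of k] unfolding E_def by auto
  have dD: "0 \<le> D k - D (Suc k)" if "k < n" for k
    using that d_mono[of k "Suc k"] d_pos[of k] unfolding D_def by auto
  have lhs: "(\<Sum>i<n. \<Sum>j<n. e i * d j * p i j) = 2 * (\<Sum>i<n. e i * d (n-1-i))"
  proof -
    have "(\<Sum>i<n. \<Sum>j<n. e i * d j * p i j) = (\<Sum>i<n. 2 * (e i * d (n-1-i)))"
    proof (rule sum.cong[OF refl])
      fix i assume i: "i \<in> {..<n}"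
      have "(\<Sum>j<n. e i * d j * p i j) = (\<Sum>j<n. if j = n - 1 - i then 2 * (e i * d j) else 0)"
        unfolding p_def using i by (intro sum.cong) auto
      also have "\<dots> = 2 * (e i * d (n-1-i))" using i by simp
      finally show "(\<Sum>j<n. e i * d j * p i j) = 2 * (e i * d (n-1-i))" .
    qed
    thus ?thesis by (simp add: sum_distrib_left)
  qed
  have P: "(\<Sum>j<Suc l. \<Sum>i<Suc k. p i j) = 2 * real (Suc k + Suc l - n)" if k: "k < n" and l: "l < n" for k l
  proof -
    have "(\<Sum>j<Suc l. \<Sum>i<Suc k. p i j) = (\<Sum>j<Suc l. if n - Suc k \<le> j then 2 else 0)"
    proof (rule sum.cong[OF refl])
      fix j assume j: "j \<in> {..<Suc l}"
      have "(\<Sum>i<Suc k. p i j) = (\<Sum>i<Suc k. if i = n - 1 - j then 2 else 0)"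
        unfolding p_def using j l by (intro sum.cong) auto
      also have "\<dots> = (if n - Suc k \<le> j then 2 else 0)" using j l k by auto
      finally show "(\<Sum>i<Suc k. p i j) = (if n - Suc k \<le> j then 2 else 0)" .
    qed
    also have "\<dots> = (\<Sum>j\<in>{n - Suc k..<Suc l}. 2)"
      by (rule sum.mono_neutral_cong_right) auto
    also have "\<dots> = 2 * real (Suc k + Suc l - n)" using k l by simp
    finally show ?thesis .
  qed
  have "2 * (\<Sum>i<n. e i * d (n-1-i)) = (\<Sum>k<n. (E k - E (Suc k)) * (\<Sum>l<n. (D l - D (Suc l)) * (\<Sum>j<Suc l. \<Sum>i<Suc k. p i j)))"
    unfolding lhs[symmetric] E_def D_def by (rule abel2)
  also have "\<dots> \<le> (\<Sum>k<n. (E k - E (Suc k)) * (\<Sum>l<n. (D l - D (Suc l)) * (\<Sum>j<Suc l. \<Sum>i<Suc k. q i j)))"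
  proof (rule sum_mono, rule mult_left_mono)
    fix k assume k: "k \<in> {..<n}"
    show "0 \<le> E k - E (Suc k)" using dE k by auto
    show "(\<Sum>l<n. (D l - D (Suc l)) * (\<Sum>j<Suc l. \<Sum>i<Suc k. p i j))
        \<le> (\<Sum>l<n. (D l - D (Suc l)) * (\<Sum>j<Suc l. \<Sum>i<Suc k. q i j))"
    proof (rule sum_mono, rule mult_left_mono)
      fix l assume l: "l \<in> {..<n}"
      show "0 \<le> D l - D (Suc l)" using dD l by auto
      have "2 * real (Suc k + Suc l - n) \<le> (\<Sum>j<Suc l. \<Sum>i<Suc k. q i j)"
      proof (cases "Suc k + Suc l \<le> n")
        case True thus ?thesis using q_nn by (simp add: sum_nonneg)
      next
        case False thus ?thesis using pref[of "Suc k" "Suc l"] k l by (simp add: of_nat_diff)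
      qed
      thus "(\<Sum>j<Suc l. \<Sum>i<Suc k. p i j) \<le> (\<Sum>j<Suc l. \<Sum>i<Suc k. q i j)" using P k l by simp
    qed
  qed
  also have "\<dots> = (\<Sum>i<n. \<Sum>j<n. e i * d j * q i j)"
    unfolding E_def D_def by (rule abel2[symmetric])
  finally show ?thesis .
qed



lemma J_index: assumes "a < 2*n" "b < 2*n" shows "sympJ n $$ (a,b) = Jm n a b"
  using assms unfolding sympJ_def Jm_def by auto

lemma Jm_sum: assumes "c < 2*n" shows "(\<Sum>b<2*n. Jm n c b * x b) = Jv n x c"
proof (cases "c < n")
  case True
  have "(\<Sum>b<2*n. Jm n c b * x b) = (\<Sum>b<2*n. if b = c + n then x b else 0)"
    unfolding Jm_def using True by (intro sum.cong) auto
  also have "\<dots> = Jv n x c" using True unfolding Jv_def by auto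
  finally show ?thesis .
next
  case False
  have "(\<Sum>b<2*n. Jm n c b * x b) = (\<Sum>b<2*n. if b = c - n then - x b else 0)"
    unfolding Jm_def using False by (intro sum.cong) auto
  also have "\<dots> = Jv n x c" using False assms unfolding Jv_def by auto
  finally show ?thesis .
qed

lemma Sp_hyp: assumes T: "T \<in> Sp n" and a: "a < 2*n" and a': "a' < 2*n"
  shows "(\<Sum>b<2*n. T$$(b,a) * Jv n (\<lambda>b'. T$$(b',a')) b) = Jm n a a'"
proof -
  have TC: "T \<in> carrier_mat (2*n) (2*n)" using SpD[OF T] by simp
  have "Jm n a a' = (transpose_mat T * sympJ n * T) $$ (a,a')"
    using SpD(2)[OF T] J_index[OF a a'] by simp
  also have "\<dots> = (\<Sum>b<2*n. (\<Sum>c<2*n. T$$(c,a) * Jm n c b) * T$$(b,a'))"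
    using TC a a' by (simp add: scalar_prod_def lessThan_atLeast0 J_index cm ct)
  also have "\<dots> = (\<Sum>c<2*n. T$$(c,a) * (\<Sum>b<2*n. Jm n c b * T$$(b,a')))"
    apply (simp add: sum_distrib_left sum_distrib_right mult_ac)
    apply (subst sum.swap)
    apply (simp add: mult_ac)
    done
  also have "\<dots> = (\<Sum>c<2*n. T$$(c,a) * Jv n (\<lambda>b'. T$$(b',a')) c)"
    by (rule sum.cong[OF refl]) (simp add: Jm_sum)
  finally show ?thesis by simp
qed

lemma pref_T: assumes T: "T \<in> Sp n" and K: "K \<le> n" and L: "L \<le> n"
  shows "2*real K + 2*real L - 2*real n \<le> (\<Sum>j<L. \<Sum>i<K. qq T n i j)"
proof -
  have "2*real L + 2*real K - 2*real n \<le> (\<Sum>b\<in>Xs n K. \<Sum>a\<in>Xs n L. (T$$(b,a))^2)"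
    by (rule core[OF L K, of "\<lambda>a b. T$$(b,a)"]) (use Sp_hyp[OF T] in auto)
  also have "\<dots> = (\<Sum>i<K. \<Sum>j<L. qq T n i j)"
    unfolding psum[OF K] psum[OF L] qq_def by (simp add: sum.distrib algebra_simps)
  also have "\<dots> = (\<Sum>j<L. \<Sum>i<K. qq T n i j)" by (rule sum.swap)
  finally show ?thesis by simp
qed

lemma lower_T: assumes T: "T \<in> Sp n"
  and e_mono: "\<And>i j. i \<le> j \<Longrightarrow> j < n \<Longrightarrow> e j \<le> e i" and e_pos: "\<And>i. i < n \<Longrightarrow> 0 \<le> e i"
  and d_mono: "\<And>i j. i \<le> j \<Longrightarrow> j < n \<Longrightarrow> d j \<le> d i" and d_pos: "\<And>i. i < n \<Longrightarrow> 0 \<le> d i"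
  shows "2 * (\<Sum>i<n. e i * d (n-1-i)) \<le> mat_trace (T * DD n d * transpose_mat T * DD n e)"
  unfolding trace_formula[OF SpD(1)[OF T]]
proof (rule abel_ineq[OF e_mono e_pos d_mono d_pos])
  show "\<And>i j. 0 \<le> qq T n i j" unfolding qq_def by simp
  show "\<And>K L. K \<le> n \<Longrightarrow> L \<le> n \<Longrightarrow> 2*real K + 2*real L - 2*real n \<le> (\<Sum>j<L. \<Sum>i<K. qq T n i j)"
    by (rule pref_T[OF T])
qed auto

definition Rv :: "nat \<Rightarrow> real mat" where "Rv n = mat n n (\<lambda>(i,j). if i + j = n - 1 then 1 else 0)"
definition Pm :: "nat \<Rightarrow> real mat" where "Pm n = four_block_mat (Rv n) (0\<^sub>m n n) (0\<^sub>m n n) (Rv n)"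

lemma Rv_carrier[simp]: "Rv n \<in> carrier_mat n n" unfolding Rv_def by auto
lemma Rv_T: "transpose_mat (Rv n) = Rv n" unfolding Rv_def by (rule eq_matI) auto
lemma Rv_sq: "Rv n * Rv n = 1\<^sub>m n"
proof (rule eq_matI)
  fix i j assume i: "i < dim_row (1\<^sub>m n)" and j: "j < dim_col (1\<^sub>m n)"
  have "(Rv n * Rv n) $$ (i,j) = (\<Sum>k<n. (if i + k = n - 1 then 1 else 0) * (if k + j = n - 1 then 1 else 0))"
    using i j by (simp add: Rv_def scalar_prod_def lessThan_atLeast0)
  also have "\<dots> = (\<Sum>k<n. if k = n - 1 - i then (if k + j = n - 1 then 1 else 0) else 0)"
    using i by (intro sum.cong) auto
  also have "\<dots> = 1\<^sub>m n $$ (i,j)" using i j by auto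
  finally show "(Rv n * Rv n) $$ (i,j) = 1\<^sub>m n $$ (i,j)" .
qed (auto simp: Rv_def)

lemma Rv_dim[simp]: "dim_row (Rv n) = n" "dim_col (Rv n) = n" unfolding Rv_def by auto
lemma Rone: "Rv n * 1\<^sub>m n = Rv n" by (rule right_mult_one_mat[of _ n]) simp
lemma neg0: "- 0\<^sub>m n n = (0\<^sub>m n n :: real mat)" by (rule eq_matI) auto
lemma Rz3: "- Rv n * 0\<^sub>m n n = 0\<^sub>m n n" by (rule eq_matI) (auto simp: Rv_def scalar_prod_def)
lemma Rz1: "Rv n * 0\<^sub>m n n = 0\<^sub>m n n" by (rule eq_matI) (auto simp: Rv_def scalar_prod_def)
lemma Rz2: "0\<^sub>m n n * Rv n = 0\<^sub>m n n" by (rule eq_matI) (auto simp: Rv_def scalar_prod_def)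
lemma Rm1: "Rv n * - 1\<^sub>m n = - Rv n" by (subst uminus_mult_right_mat) auto
lemma Rm2: "- Rv n * Rv n = - 1\<^sub>m n" by (subst uminus_mult_left_mat) (auto simp: Rv_sq)

lemma Pm_carrier[simp]: "Pm n \<in> carrier_mat (2*n) (2*n)" unfolding Pm_def mult_2 by auto

lemma Pm_Sp: "Pm n \<in> Sp n"
proof -
  have PT: "transpose_mat (Pm n) = Pm n" unfolding Pm_def
    by (subst transpose_four_block_mat[of _ n n _ n _ n]) (auto simp: Rv_T)
  have "transpose_mat (Pm n) * sympJ n * Pm n = sympJ n"
    unfolding PT unfolding Pm_def sympJ_def
    apply (subst mult_four_block_mat[of _ n n _ n _ n], auto)
    apply (subst mult_four_block_mat[of _ n n _ n _ n], auto simp: Rz1 Rz2 Rz3 Rm1 Rm2 Rv_sq Rone neg0)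
    done
  thus ?thesis unfolding Sp_def by auto
qed

lemma Pm_trace: "mat_trace (Pm n * DD n d * transpose_mat (Pm n) * DD n e) = 2 * (\<Sum>i<n. e i * d (n-1-i))"
proof -
  have q: "qq (Pm n) n i j = (if j = n - 1 - i then 2 else 0)" if "i < n" "j < n" for i j
    using that unfolding qq_def Pm_def Rv_def by auto
  have "mat_trace (Pm n * DD n d * transpose_mat (Pm n) * DD n e) = (\<Sum>i<n. \<Sum>j<n. e i * d j * qq (Pm n) n i j)"
    by (rule trace_formula) simp
  also have "\<dots> = (\<Sum>i<n. 2 * (e i * d (n-1-i)))"
  proof (rule sum.cong[OF refl])
    fix i assume i: "i \<in> {..<n}"
    have "(\<Sum>j<n. e i * d j * qq (Pm n) n i j) = (\<Sum>j<n. if j = n - 1 - i then 2 * (e i * d j) else 0)"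
      using i q by (intro sum.cong) auto
    also have "\<dots> = 2 * (e i * d (n-1-i))" using i by simp
    finally show "(\<Sum>j<n. e i * d j * qq (Pm n) n i j) = 2 * (e i * d (n-1-i))" .
  qed
  finally show ?thesis by (simp add: sum_distrib_left)
qed



lemma trace_cyc: assumes "(A::real mat) \<in> carrier_mat N N" "B \<in> carrier_mat N N"
  shows "mat_trace (A * B) = mat_trace (B * A)"
proof -
  have "mat_trace (A * B) = (\<Sum>i<N. \<Sum>k<N. A$$(i,k) * B$$(k,i))"
    using assms unfolding mat_trace_def by (auto simp: scalar_prod_def lessThan_atLeast0 intro!: sum.cong)
  also have "\<dots> = (\<Sum>k<N. \<Sum>i<N. B$$(k,i) * A$$(i,k))" by (subst sum.swap) (simp add: mult.commute)
  also have "\<dots> = mat_trace (B * A)"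
    using assms unfolding mat_trace_def by (auto simp: scalar_prod_def lessThan_atLeast0 intro!: sum.cong)
  finally show ?thesis .
qed

theorem theorem1:
  fixes n :: nat and V H :: "real mat" and lamV lamH :: "nat \<Rightarrow> real"
  assumes "n \<ge> 1"
    and "sym_pos_def (2*n) V" and "sym_pos_def (2*n) H"
    and "symplectic_eigenvalues n V lamV"
    and "symplectic_eigenvalues n H lamH"
  shows "(INF S \<in> Sp n. mat_trace (S * V * S\<^sup>T * H))
           = 2 * (\<Sum>i = 1..n. lamH i * lamV (n + 1 - i))"
proof -
  let ?J = "sympJ n"
  define dv where "dv k = lamV (k+1)" for k
  define eh where "eh k = lamH (k+1)" for k
  have VC: "V \<in> carrier_mat (2*n) (2*n)" and HC: "H \<in> carrier_mat (2*n) (2*n)"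
    using assms(2,3) unfolding sym_pos_def_def by auto
  obtain Sv where Sv: "Sv \<in> Sp n" "transpose_mat Sv * V * Sv = DD n dv"
    using assms(4) unfolding symplectic_eigenvalues_def DD_def dv_def by auto
  obtain Sh where Sh: "Sh \<in> Sp n" "transpose_mat Sh * H * Sh = DD n eh"
    using assms(5) unfolding symplectic_eigenvalues_def DD_def eh_def by auto
  have mV: "\<And>i j. 1 \<le> i \<Longrightarrow> i \<le> j \<Longrightarrow> j \<le> n \<Longrightarrow> lamV j \<le> lamV i"
    and pV: "\<And>i. 1 \<le> i \<Longrightarrow> i \<le> n \<Longrightarrow> lamV i > 0"
    using assms(4) unfolding symplectic_eigenvalues_def by auto
  have mH: "\<And>i j. 1 \<le> i \<Longrightarrow> i \<le> j \<Longrightarrow> j \<le> n \<Longrightarrow> lamH j \<le> lamH i"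
    and pH: "\<And>i. 1 \<le> i \<Longrightarrow> i \<le> n \<Longrightarrow> lamH i > 0"
    using assms(5) unfolding symplectic_eigenvalues_def by auto
  have dv_mono: "\<And>i j. i \<le> j \<Longrightarrow> j < n \<Longrightarrow> dv j \<le> dv i"
    unfolding dv_def using mV by simp
  have dv_pos: "\<And>i. i < n \<Longrightarrow> 0 \<le> dv i"
    unfolding dv_def using pV by (simp add: less_imp_le)
  have eh_mono: "\<And>i j. i \<le> j \<Longrightarrow> j < n \<Longrightarrow> eh j \<le> eh i"
    unfolding eh_def using mH by simp
  have eh_pos: "\<And>i. i < n \<Longrightarrow> 0 \<le> eh i"
    unfolding eh_def using pH by (simp add: less_imp_le)
  define val where "val = 2 * (\<Sum>i<n. eh i * dv (n-1-i))"
  have rhs: "2 * (\<Sum>i = 1..n. lamH i * lamV (n + 1 - i)) = val"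
  proof -
    have "(\<Sum>i = 1..n. lamH i * lamV (n + 1 - i)) = (\<Sum>i<n. lamH (Suc i) * lamV (n + 1 - Suc i))"
    proof -
      have e: "{1..n} = Suc ` {..<n}"
        by (metis atLeastLessThanSuc_atLeastAtMost image_Suc_lessThan)
      show ?thesis unfolding e by (simp add: sum.reindex)
    qed
    also have "\<dots> = (\<Sum>i<n. eh i * dv (n-1-i))"
      unfolding eh_def dv_def by (intro sum.cong) (auto simp: Suc_diff_Suc)
    finally show ?thesis unfolding val_def by simp
  qed
  have SvC: "Sv \<in> carrier_mat (2*n) (2*n)" and ShC: "Sh \<in> carrier_mat (2*n) (2*n)"
    using Sv Sh SpD by auto
  define Iv where "Iv = transpose_mat ?J * transpose_mat Sv * ?J"
  define Ih where "Ih = transpose_mat ?J * transpose_mat Sh * ?J"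
  have IvC: "Iv \<in> carrier_mat (2*n) (2*n)" and IhC: "Ih \<in> carrier_mat (2*n) (2*n)"
    unfolding Iv_def Ih_def using SvC ShC by (auto simp: cm ct)
  have JT: "transpose_mat ?J \<in> Sp n" by (rule Sp_transpose[OF J_Sp])
  have IvS: "Iv \<in> Sp n" unfolding Iv_def by (intro Sp_mult JT J_Sp Sp_transpose Sv(1))
  have IhS: "Ih \<in> Sp n" unfolding Ih_def by (intro Sp_mult JT J_Sp Sp_transpose Sh(1))
  have SvIv: "Sv * Iv = 1\<^sub>m (2*n)" unfolding Iv_def by (rule Sp_right_inv[OF Sv(1)])
  have ShIh: "Sh * Ih = 1\<^sub>m (2*n)" unfolding Ih_def by (rule Sp_right_inv[OF Sh(1)])
  have Vexp: "V = transpose_mat Iv * DD n dv * Iv"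
  proof -
    have "transpose_mat Iv * DD n dv * Iv = transpose_mat Iv * (transpose_mat Sv * V * Sv) * Iv"
      using Sv(2) by simp
    also have "\<dots> = transpose_mat (Sv * Iv) * V * (Sv * Iv)"
      using SvC IvC VC by (simp add: cm ct ca[where N="2*n"] ctm[where N="2*n"])
    also have "\<dots> = V" unfolding SvIv using VC by simp
    finally show ?thesis by simp
  qed
  have Hexp: "H = transpose_mat Ih * DD n eh * Ih"
  proof -
    have "transpose_mat Ih * DD n eh * Ih = transpose_mat Ih * (transpose_mat Sh * H * Sh) * Ih"
      using Sh(2) by simp
    also have "\<dots> = transpose_mat (Sh * Ih) * H * (Sh * Ih)"
      using ShC IhC HC by (simp add: cm ct ca[where N="2*n"] ctm[where N="2*n"])
    also have "\<dots> = H" unfolding ShIh using HC by simp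
    finally show ?thesis by simp
  qed
  have lower: "val \<le> mat_trace (S * V * transpose_mat S * H)" if S: "S \<in> Sp n" for S
  proof -
    have SC: "S \<in> carrier_mat (2*n) (2*n)" using SpD[OF S] by simp
    define T where "T = Ih * S * transpose_mat Iv"
    have TS: "T \<in> Sp n" unfolding T_def by (intro Sp_mult IhS S Sp_transpose IvS)
    have DC: "DD n dv \<in> carrier_mat (2*n) (2*n)" "DD n eh \<in> carrier_mat (2*n) (2*n)" by auto
    have "mat_trace (S * V * transpose_mat S * H)
       = mat_trace ((S * transpose_mat Iv * DD n dv * Iv * transpose_mat S * transpose_mat Ih * DD n eh) * Ih)"
      apply (subst Vexp, subst Hexp)
      using SC IvC IhC DC by (simp add: cm ct ca[where N="2*n"])
    also have "\<dots> = mat_trace (Ih * (S * transpose_mat Iv * DD n dv * Iv * transpose_mat S * transpose_mat Ih * DD n eh))"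
      by (rule trace_cyc[of _ "2*n"]) (use SC IvC IhC DC in \<open>simp_all add: cm ct\<close>)
    also have "\<dots> = mat_trace (T * DD n dv * transpose_mat T * DD n eh)"
      unfolding T_def using SC IvC IhC DC by (simp add: cm ct ca[where N="2*n"] ctm[where N="2*n"])
    finally have "mat_trace (S * V * transpose_mat S * H) = mat_trace (T * DD n dv * transpose_mat T * DD n eh)" .
    moreover have "val \<le> mat_trace (T * DD n dv * transpose_mat T * DD n eh)"
      unfolding val_def by (rule lower_T[OF TS eh_mono eh_pos dv_mono dv_pos])
    ultimately show ?thesis by simp
  qed
  define S0 where "S0 = Sh * Pm n * transpose_mat Sv"
  have S0S: "S0 \<in> Sp n" unfolding S0_def by (intro Sp_mult Sh(1) Pm_Sp Sp_transpose Sv(1))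
  have attain: "mat_trace (S0 * V * transpose_mat S0 * H) = val"
  proof -
    have PC: "Pm n \<in> carrier_mat (2*n) (2*n)" by simp
    have "mat_trace (S0 * V * transpose_mat S0 * H)
        = mat_trace (Sh * (Pm n * transpose_mat Sv * V * Sv * transpose_mat (Pm n) * transpose_mat Sh * H))"
      unfolding S0_def using SvC ShC VC HC PC by (simp add: cm ct ca[where N="2*n"] ctm[where N="2*n"])
    also have "\<dots> = mat_trace ((Pm n * transpose_mat Sv * V * Sv * transpose_mat (Pm n) * transpose_mat Sh * H) * Sh)"
      by (rule trace_cyc[of _ "2*n"]) (use SvC ShC VC HC PC in \<open>simp_all add: cm ct\<close>)
    also have "\<dots> = mat_trace (Pm n * (transpose_mat Sv * V * Sv) * transpose_mat (Pm n) * (transpose_mat Sh * H * Sh))"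
      using SvC ShC VC HC PC by (simp add: cm ct ca[where N="2*n"])
    also have "\<dots> = mat_trace (Pm n * DD n dv * transpose_mat (Pm n) * DD n eh)"
      unfolding Sv(2) Sh(2) ..
    also have "\<dots> = val" unfolding val_def by (rule Pm_trace)
    finally show ?thesis .
  qed
  have "(INF S \<in> Sp n. mat_trace (S * V * S\<^sup>T * H)) = val"
    by (rule cInf_eq_minimum) (use S0S attain lower in auto)
  thus ?thesis using rhs by simp
qed

end
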